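(* Let $b\geq 2$ be fixed. For all sufficiently large $N$, \[ \frac{N^2}{16b^2}\leq\mathcal{S}_{1,2}(N)\leq\frac{N^2}{2}\qquad\text{and}\qquad \frac{N^2}{8b}\leq\mathcal{S}_{2,1}(N)\leq\frac{N^2}{2}. \] In particular $\mathcal{S}_{1,2}(N),\mathcal{S}_{2,1}(N)\asymp_b N^2$.
   Context: For a positive integer $n$ with $L$ digits in base $b$, $n=\sum_{0\leq i<L}\varepsilon_i(n)b^i$ ($\varepsilon_i(n)\in\{0,\dots,b-1\}$, $\varepsilon_{L-1}(n)\neq0$), its digital reverse is $\overleftarrow{n}=\sum_{0\leq i<L}\varepsilon_i(n)b^{L-1-i}$. For a positive integer $N$, \[ \mathcal{S}_{1,2}(N)=\sum_{\substack{n_1,n_2,n_3\leq N\\ n_1+n_2+n_3=N\\ (\overleftarrow{n_2}\,\overleftarrow{n_3},b)=1}}1,\qquad \mathcal{S}_{2,1}(N)=\sum_{\substack{n_1,n_2,n_3\leq N\\ n_1+n_2+n_3=N\\ (\overleftarrow{n_3},b)=1}}1, \] sums over positive integers $n_1,n_2,n_3$; $(\cdot,\cdot)$ is gcd. *)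

theory Defs
  imports "HOL-Analysis.Analysis"
begin

fun ndigits :: "nat \<Rightarrow> nat \<Rightarrow> nat" where
  "ndigits b n = (if n = 0 \<or> b < 2 then 0 else Suc (ndigits b (n div b)))"

declare ndigits.simps[simp del]

definition digit :: "nat \<Rightarrow> nat \<Rightarrow> nat \<Rightarrow> nat" where
  "digit b n i = n div b ^ i mod b"

definition digrev :: "nat \<Rightarrow> nat \<Rightarrow> nat" where
  "digrev b n = (\<Sum>i<ndigits b n. digit b n i * b ^ (ndigits b n - 1 - i))"

definition S12 :: "nat \<Rightarrow> nat \<Rightarrow> nat" where
  "S12 b N = card {(n1, n2, n3). 1 \<le> n1 \<and> 1 \<le> n2 \<and> 1 \<le> n3 \<and>
      n1 \<le> N \<and> n2 \<le> N \<and> n3 \<le> N \<and> n1 + n2 + n3 = N \<and>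
      coprime (digrev b n2 * digrev b n3) b}"

definition S21 :: "nat \<Rightarrow> nat \<Rightarrow> nat" where
  "S21 b N = card {(n1, n2, n3). 1 \<le> n1 \<and> 1 \<le> n2 \<and> 1 \<le> n3 \<and>
      n1 \<le> N \<and> n2 \<le> N \<and> n3 \<le> N \<and> n1 + n2 + n3 = N \<and>
      coprime (digrev b n3) b}"

end

theory Submission
  imports Defs
begin


lemma ndigits_Suc: "n \<noteq> 0 \<Longrightarrow> 2 \<le> b \<Longrightarrow> ndigits b n = Suc (ndigits b (n div b))"
  by (rule trans[OF ndigits.simps]) simp

lemma ndigits_0: "ndigits b 0 = 0"
  by (rule trans[OF ndigits.simps]) simp

lemma ndigits_eq:
  assumes "b \<ge> 2" shows "b^k \<le> n \<Longrightarrow> n < b^(k+1) \<Longrightarrow> ndigits b n = k+1"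
proof (induction k arbitrary: n)
  case 0
  have "n div b = 0" "n \<noteq> 0" using 0 by auto
  then show ?case using assms ndigits_Suc ndigits_0 by simp
next
  case (Suc k)
  have bpos: "0 < b" using assms by simp
  have h1: "b^k * b \<le> n" using Suc.prems(1) by (simp add: mult.commute)
  have "b^k \<le> n div b" using h1 bpos by (simp add: less_eq_div_iff_mult_less_eq)
  moreover have "n < b^(k+1) * b" using Suc.prems(2) by (simp add: mult_ac)
  hence "n div b < b^(k+1)" using bpos by (simp add: div_less_iff_less_mult)
  ultimately have "ndigits b (n div b) = k+1" using Suc.IH by blast
  moreover have "0 < b^(Suc k)" using bpos by simp
  hence "n \<noteq> 0" using Suc.prems by linarith
  ultimately show ?case using assms ndigits_Suc by simp
qed


lemma digrev_mod:
  assumes "b \<ge> 2" "ndigits b n = Suc L"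
  shows "digrev b n mod b = digit b n L"
proof -
  have "digrev b n = (\<Sum>i<L. digit b n i * b ^ (L - i)) + digit b n L"
    unfolding digrev_def assms(2) by simp
  moreover have "b dvd (\<Sum>i<L. digit b n i * b ^ (L - i))"
    by (intro dvd_sum) simp
  moreover have "digit b n L < b" using assms unfolding digit_def by simp
  ultimately show ?thesis by (auto elim!: dvdE)
qed

lemma good:
  assumes "b \<ge> 2" "b^k \<le> n" "n < 2 * b^k"
  shows "coprime (digrev b n) b"
proof -
  have "2 * b^k \<le> b * b^k" using assms(1) by simp
  hence "n < b * b^k" using assms(3) by linarith
  hence "n < b^(k+1)" by simp
  hence "ndigits b n = Suc k" using ndigits_eq assms by simp
  hence "digrev b n mod b = digit b n k" using digrev_mod assms by blast
  moreover have "n div b^k = 1" using assms by (intro div_nat_eqI) auto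
  hence "digit b n k = 1" using assms unfolding digit_def by simp
  ultimately have "coprime (digrev b n mod b) b" by simp
  thus ?thesis using assms by simp
qed


definition PP :: "nat \<Rightarrow> (nat \<Rightarrow> nat \<Rightarrow> bool) \<Rightarrow> (nat \<times> nat) set" where
  "PP N Q = {(a,c). 1 \<le> a \<and> 1 \<le> c \<and> a + c < N \<and> Q a c}"

lemma PP_sub: "PP N Q \<subseteq> {..<N} \<times> {..<N}" unfolding PP_def by auto

lemma PP_fin: "finite (PP N Q)" using PP_sub finite_subset by blast

lemma card_T:
  "card {(n1, n2, n3). 1 \<le> n1 \<and> 1 \<le> n2 \<and> 1 \<le> n3 \<and>
      n1 \<le> N \<and> n2 \<le> N \<and> n3 \<le> N \<and> n1 + n2 + n3 = N \<and> Q n2 n3} = card (PP N Q)"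
proof -
  let ?g = "\<lambda>(a,c). (N - a - c, a, (c::nat))"
  have "{(n1, n2, n3). 1 \<le> n1 \<and> 1 \<le> n2 \<and> 1 \<le> n3 \<and>
      n1 \<le> N \<and> n2 \<le> N \<and> n3 \<le> N \<and> n1 + n2 + n3 = N \<and> Q n2 n3} = ?g ` PP N Q"
  proof (intro equalityI subsetI)
    fix x assume "x \<in> {(n1, n2, n3). 1 \<le> n1 \<and> 1 \<le> n2 \<and> 1 \<le> n3 \<and>
      n1 \<le> N \<and> n2 \<le> N \<and> n3 \<le> N \<and> n1 + n2 + n3 = N \<and> Q n2 n3}"
    then obtain n1 n2 n3 where x: "x = (n1,n2,n3)" "1 \<le> n1" "1 \<le> n2" "1 \<le> n3"
      "n1 + n2 + n3 = N" "Q n2 n3" by blast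
    have "(n2,n3) \<in> PP N Q" using x unfolding PP_def by simp
    moreover have "x = ?g (n2,n3)" using x by simp
    ultimately show "x \<in> ?g ` PP N Q" by blast
  next
    fix x assume "x \<in> ?g ` PP N Q"
    then obtain a c where "x = ?g (a,c)" "1 \<le> a" "1 \<le> c" "a + c < N" "Q a c"
      unfolding PP_def by blast
    then show "x \<in> {(n1, n2, n3). 1 \<le> n1 \<and> 1 \<le> n2 \<and> 1 \<le> n3 \<and>
      n1 \<le> N \<and> n2 \<le> N \<and> n3 \<le> N \<and> n1 + n2 + n3 = N \<and> Q n2 n3}" by simp
  qed
  moreover have "inj_on ?g (PP N Q)" by (auto simp: inj_on_def)
  ultimately show ?thesis by (simp add: card_image)
qed

lemma PP_upper: "2 * card (PP N Q) \<le> N^2"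
proof -
  let ?A = "PP N (\<lambda>_ _. True)"
  let ?f = "\<lambda>(a,c). (N - a, N - (c::nat))"
  have fA: "finite ?A" by (rule PP_fin)
  have "card (PP N Q) \<le> card ?A" by (rule card_mono[OF fA]) (auto simp: PP_def)
  moreover have "inj_on ?f ?A" by (auto simp: inj_on_def PP_def)
  hence "card (?f ` ?A) = card ?A" by (simp add: card_image)
  moreover have "?A \<inter> ?f ` ?A = {}" by (auto simp: PP_def)
  moreover have "?A \<union> ?f ` ?A \<subseteq> {..<N} \<times> {..<N}" by (auto simp: PP_def)
  hence "card (?A \<union> ?f ` ?A) \<le> N * N"
    by (metis card_lessThan card_cartesian_product card_mono finite_SigmaI finite_lessThan)
  moreover have "card (?A \<union> ?f ` ?A) = card ?A + card (?f ` ?A)"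
    using fA by (intro card_Un_disjoint) (auto simp: PP_def)
  ultimately show ?thesis by (simp add: power2_eq_square)
qed

lemma PP_lower:
  assumes "A \<times> C \<subseteq> PP N Q"
  shows "card A * card C \<le> card (PP N Q)"
  using card_mono[OF PP_fin assms] by (simp add: card_cartesian_product)

lemma exk:
  fixes N b :: nat
  assumes "b \<ge> 2" "4 \<le> N" shows "\<exists>k. 4 * b^k \<le> N \<and> N < 4 * b^(Suc k)"
  using assms(2)
proof (induction N rule: dec_induct)
  case base
  then show ?case using assms by (intro exI[of _ 0]) auto
next
  case (step n)
  then obtain k where k: "4 * b^k \<le> n" "n < 4 * b^(Suc k)" by blast
  show ?case
  proof (cases "Suc n < 4 * b^(Suc k)")
    case True then show ?thesis using k by (intro exI[of _ k]) auto
  next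
    case False
    hence "Suc n = 4 * b^Suc k" using k by simp
    moreover have "b^Suc k < b^Suc (Suc k)" using assms by simp
    ultimately show ?thesis by (intro exI[of _ "Suc k"]) auto
  qed
qed

lemma a17: "(N::nat) * N \<le> 16 * b^2 * (B * B) \<Longrightarrow> B * B \<le> S \<Longrightarrow> N * N \<le> 16 * b^2 * S"
  using le_trans mult_le_mono2 by blast
lemma a18: assumes "(N::nat) * N \<le> 16 * b^2 * S" shows "real N * real N \<le> 16 * real b ^ 2 * real S"
proof -
  have "real (N * N) \<le> real (16 * b^2 * S)" using assms by (simp only: of_nat_le_iff)
  thus ?thesis by simp
qed
lemma a22: assumes "real N * real N \<le> 16 * real b ^ 2 * real S" "0 < real b"
  shows "real N ^ 2 / (16 * real b ^ 2) \<le> real S"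
proof -
  have "0 < 16 * real b ^2" using assms by simp
  thus ?thesis using assms(1) by (simp add: pos_divide_le_eq power2_eq_square mult_ac)
qed
lemma a24: assumes "2 * S \<le> (N::nat)^2" shows "real S \<le> real N ^ 2 / 2"
proof -
  have "real (2 * S) \<le> real (N^2)" using assms by (simp only: of_nat_le_iff)
  thus ?thesis by simp
qed

lemma a14: assumes "(N::nat) < 4 * b * B" shows "N * N \<le> 16 * b^2 * (B * B)"
proof -
  have "N * N \<le> (4*b*B) * (4*b*B)" using assms by (intro mult_le_mono) auto
  thus ?thesis by (simp add: power2_eq_square mult_ac)
qed
lemma a16: assumes "(N::nat) < 4 * b * B" "4 * B \<le> N" shows "N * N \<le> 8 * b * ((N - 2*B) * B)"
proof -
  have "N * N \<le> N * (4 * b * B)" using assms by simp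
  also have "\<dots> \<le> (2 * (N - 2*B)) * (4 * b * B)" using assms(2) by (intro mult_le_mono) auto
  also have "\<dots> = 8 * b * ((N - 2*B) * B)" by (simp add: mult_ac)
  finally show ?thesis .
qed

lemma a20: assumes "(N::nat) * N \<le> 8 * b * S" shows "real N * real N \<le> 8 * real b * real S"
proof -
  have "real (N * N) \<le> real (8 * b * S)" using assms by (simp only: of_nat_le_iff)
  thus ?thesis by simp
qed
lemma a22b: assumes "real N * real N \<le> 8 * real b * real S" "0 < real b"
  shows "real N ^ 2 / (8 * real b) \<le> real S"
proof -
  have "0 < 8 * real b" using assms by simp
  thus ?thesis using assms(1) by (simp add: pos_divide_le_eq power2_eq_square mult_ac)
qed

theorem lemma4p1:
  fixes b :: nat
  assumes "b \<ge> 2"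
  shows "\<forall>\<^sub>F N in sequentially.
     real N ^ 2 / (16 * real b ^ 2) \<le> real (S12 b N) \<and> real (S12 b N) \<le> real N ^ 2 / 2 \<and>
     real N ^ 2 / (8 * real b) \<le> real (S21 b N) \<and> real (S21 b N) \<le> real N ^ 2 / 2"
proof -
  have ev: "\<forall>\<^sub>F N in sequentially. (4::nat) \<le> N" by (rule eventually_ge_at_top)
  show ?thesis
  proof (rule eventually_mono[OF ev])
    fix N :: nat assume N4: "4 \<le> N"
    obtain k where k: "4 * b^k \<le> N" "N < 4 * b^(Suc k)" using exk[OF assms N4] by blast
    define B where "B = b^k"
    have B1: "1 \<le> B" using assms unfolding B_def by simp
    have NB: "N < 4 * b * B" using k unfolding B_def by (simp add: mult.assoc)
    have NB2: "4 * B \<le> N" using k unfolding B_def by simp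
    have e12: "S12 b N = card (PP N (\<lambda>a c. coprime (digrev b a * digrev b c) b))"
      unfolding S12_def by (rule card_T)
    have e21: "S21 b N = card (PP N (\<lambda>a c. coprime (digrev b c) b))"
      unfolding S21_def by (rule card_T)
    have gd: "coprime (digrev b n) b" if "B \<le> n" "n < 2 * B" for n
      using good[OF assms] that unfolding B_def by blast
    have s12: "{B..<2*B} \<times> {B..<2*B} \<subseteq> PP N (\<lambda>a c. coprime (digrev b a * digrev b c) b)"
      using gd B1 NB2 unfolding PP_def by auto
    have s21: "{1..N-2*B} \<times> {B..<2*B} \<subseteq> PP N (\<lambda>a c. coprime (digrev b c) b)"
      using gd B1 NB2 unfolding PP_def by auto
    have l12: "B * B \<le> S12 b N" using PP_lower[OF s12] e12 by simp
    have l21: "(N - 2*B) * B \<le> S21 b N" using PP_lower[OF s21] e21 by simp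
    have u12: "2 * S12 b N \<le> N^2" using PP_upper e12 by simp
    have u21: "2 * S21 b N \<le> N^2" using PP_upper e21 by simp
    have n12: "N * N \<le> 16 * b^2 * S12 b N" using a14[OF NB] l12 le_trans mult_le_mono2 by blast
    have n21: "N * N \<le> 8 * b * S21 b N" using a16[OF NB NB2] l21 le_trans mult_le_mono2 by blast
    have bp: "0 < real b" using assms by simp
    show "real N ^ 2 / (16 * real b ^ 2) \<le> real (S12 b N) \<and> real (S12 b N) \<le> real N ^ 2 / 2 \<and>
     real N ^ 2 / (8 * real b) \<le> real (S21 b N) \<and> real (S21 b N) \<le> real N ^ 2 / 2"
    proof (intro conjI)
      show "real N ^ 2 / (16 * real b ^ 2) \<le> real (S12 b N)"
        by (rule a22[OF a18[OF n12] bp])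
      show "real N ^ 2 / (8 * real b) \<le> real (S21 b N)"
        by (rule a22b[OF a20[OF n21] bp])
      show "real (S12 b N) \<le> real N ^ 2 / 2" by (rule a24[OF u12])
      show "real (S21 b N) \<le> real N ^ 2 / 2" by (rule a24[OF u21])
    qed
  qed
qed

end
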